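(* Let $\mathcal{X}$ be a set with $|\mathcal{X}|\ge2$ and $\mathcal{D}$ the class of all finite multisets with elements drawn from $\mathcal{X}$. Let $d\colon\mathcal{X}\times\mathcal{X}\to[0,1]$ be a normalized distance and, for $x\in D$, let $\mathrm{avg}(x,D)=\frac{1}{|D|}\sum_{z\in D}d(x,z)$ (sum with multiplicity). For $K\in(0,1)\cap\mathbb{Q}$, consider the deterministic suppression algorithm $\mathcal{S}_K(D)=\{x\in D\mid\mathrm{avg}(x,D)\le K\}$ (as a sub-multiset of $D$). Then $\Delta_{\mathcal{D}}\mathcal{S}_K=\infty$.
   Context: A normalized distance is a metric $d$ on $\mathcal{X}$ with values in $[0,1]$ and $\sup_{x,y\in\mathcal{X}}d(x,y)=1$. Two databases are (unbounded) neighboring if one is obtained from the other by adding exactly one record. For a deterministic suppression algorithm $\mathcal{S}$ (a map sending each database $D$ to a sub-multiset of $D$), its sensitivity is $\Delta_{\mathcal{D}}\mathcal{S}=\sup_{D,D'\in\mathcal{D}\text{ neighboring}}|\mathcal{S}(D)\,\Delta\,\mathcal{S}(D')|$, where $\Delta$ is multiset symmetric difference. *)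

theory Defs
  imports Complex_Main "HOL-Library.Multiset" "HOL-Library.Extended_Nat"
begin

definition normalized_distance :: "'a set \<Rightarrow> ('a \<Rightarrow> 'a \<Rightarrow> real) \<Rightarrow> bool" where
  "normalized_distance X d \<longleftrightarrow>
     (\<forall>x\<in>X. \<forall>y\<in>X. 0 \<le> d x y \<and> d x y \<le> 1 \<and> (d x y = 0 \<longleftrightarrow> x = y) \<and> d x y = d y x) \<and>
     (\<forall>x\<in>X. \<forall>y\<in>X. \<forall>z\<in>X. d x z \<le> d x y + d y z) \<and>
     (SUP p\<in>X \<times> X. d (fst p) (snd p)) = 1"

definition databases :: "'a set \<Rightarrow> 'a multiset set" where
  "databases X = {D. set_mset D \<subseteq> X}"

definition avg :: "('a \<Rightarrow> 'a \<Rightarrow> real) \<Rightarrow> 'a \<Rightarrow> 'a multiset \<Rightarrow> real" where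
  "avg d x D = (\<Sum>z\<in>#D. d x z) / real (size D)"

definition suppress :: "('a \<Rightarrow> 'a \<Rightarrow> real) \<Rightarrow> real \<Rightarrow> 'a multiset \<Rightarrow> 'a multiset" where
  "suppress d K D = filter_mset (\<lambda>x. avg d x D \<le> K) D"

definition neighboring :: "'a set \<Rightarrow> 'a multiset \<Rightarrow> 'a multiset \<Rightarrow> bool" where
  "neighboring X D D' \<longleftrightarrow> D \<in> databases X \<and> D' \<in> databases X \<and>
     (\<exists>x\<in>X. D' = D + {#x#} \<or> D = D' + {#x#})"

definition sensitivity :: "'a set \<Rightarrow> ('a multiset \<Rightarrow> 'a multiset) \<Rightarrow> enat" where
  "sensitivity X S = (SUP p\<in>{(D, D'). neighboring X D D'}.
      enat (size ((S (fst p) - S (snd p)) + (S (snd p) - S (fst p)))))"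

end

theory Submission
  imports Defs
begin

lemma step_exists: "\<not> P (0::nat) \<Longrightarrow> P N \<Longrightarrow> \<exists>n. \<not> P n \<and> P (Suc n)"
  by (induction N) auto

lemma enat_all_le: "(\<And>m. enat m \<le> x) \<Longrightarrow> x = \<infinity>"
  by (metis enat_ord_simps(2) lessI not_le not_infinity_eq)

theorem proposition2:
  fixes X :: "'a set" and d :: "'a \<Rightarrow> 'a \<Rightarrow> real" and K :: real
  assumes "\<exists>a\<in>X. \<exists>b\<in>X. a \<noteq> b"
    and "normalized_distance X d"
    and "K \<in> \<rat>" and "0 < K" and "K < 1"
  shows "sensitivity X (suppress d K) = \<infinity>"
proof -
  have nd: "\<forall>x\<in>X. \<forall>y\<in>X. 0 \<le> d x y \<and> d x y \<le> 1 \<and> (d x y = 0 \<longleftrightarrow> x = y) \<and> d x y = d y x"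
    and sup: "(SUP p\<in>X \<times> X. d (fst p) (snd p)) = 1"
    using assms(2) unfolding normalized_distance_def by auto
  have ne: "X \<times> X \<noteq> {}" using assms(1) by auto
  have bdd: "bdd_above ((\<lambda>p. d (fst p) (snd p)) ` (X \<times> X))"
    using nd by (intro bdd_aboveI[of _ 1]) auto
  have "K < (SUP p\<in>X \<times> X. d (fst p) (snd p))" using sup assms(5) by simp
  then obtain p where p: "p \<in> X \<times> X" "K < d (fst p) (snd p)"
    using less_cSUP_iff[OF ne bdd] by blast
  define a where "a = fst p"
  define b where "b = snd p"
  define \<delta> where "\<delta> = d a b"
  have aX: "a \<in> X" and bX: "b \<in> X" using p(1) by (auto simp: a_def b_def)
  have Kd: "K < \<delta>" using p(2) by (simp add: \<delta>_def a_def b_def)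
  have daa: "d a a = 0" using nd aX by auto
  have ab: "a \<noteq> b" using Kd assms(4) daa \<delta>_def by auto
  show ?thesis
  proof (rule enat_all_le)
    fix m0 :: nat
    define m where "m = Suc m0"
    define P where "P = (\<lambda>n::nat. K < real n * \<delta> / real (m + n))"
    have P0: "\<not> P 0" using assms(4) by (simp add: P_def)
    obtain N where N: "K * real m < real N * (\<delta> - K)"
      using reals_Archimedean3[of "\<delta> - K"] Kd by auto
    have "P N" unfolding P_def using N m_def by (simp add: field_simps)
    then obtain n where n: "\<not> P n" "P (Suc n)" using step_exists[of P, OF P0] by blast
    define D where "D = replicate_mset m a + replicate_mset n b"
    define D' where "D' = D + {#b#}"
    have nb: "neighboring X D D'"
      unfolding neighboring_def databases_def D'_def D_def using aX bX by auto
    have sD: "(\<Sum>z\<in>#D. d a z) = real n * \<delta>"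
      by (simp add: D_def daa \<delta>_def)
    have sD': "(\<Sum>z\<in>#D'. d a z) = real (Suc n) * \<delta>"
      by (simp add: D'_def D_def daa \<delta>_def algebra_simps)
    have z1: "size D = m + n" by (simp add: D_def)
    have z2: "size D' = m + Suc n" by (simp add: D'_def D_def)
    have av1: "avg d a D \<le> K" using n(1) sD z1 by (simp add: avg_def P_def add.assoc add.left_commute)
    have av2: "\<not> avg d a D' \<le> K" using n(2) sD' z2 by (simp add: avg_def P_def add.assoc add.left_commute)
    have c1: "count (suppress d K D) a = m" using av1 ab
      by (simp add: suppress_def D_def)
    have c2: "count (suppress d K D') a = 0" using av2
      by (simp add: suppress_def)
    let ?M = "(suppress d K D - suppress d K D') + (suppress d K D' - suppress d K D)"
    have "m \<le> count ?M a" using c1 c2 by simp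
    also have "\<dots> \<le> size ?M" by (rule count_le_size)
    finally have "enat m0 \<le> enat (size ?M)" using m_def by simp
    also have "\<dots> \<le> sensitivity X (suppress d K)"
      unfolding sensitivity_def
      by (rule SUP_upper2[of "(D, D')"]) (use nb in auto)
    finally show "enat m0 \<le> sensitivity X (suppress d K)" .
  qed
qed

end
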